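(* Consider the amplicon branching process with stutter with parameters $p,\xi\in[0,1]$, started from a single target amplicon and no stutter amplicons, and let $T$ and $S$ be the numbers of target and stutter amplicons after $n\ge 0$ cycles. Write $q=p(1-\xi)$. Then $$\mathbb{E}[T]=(1+q)^n,\qquad \mathbb{E}[S]=(1+p)^n-(1+q)^n,$$ $$\operatorname{Var}(T)=\frac{1-q}{1+q}\,(1+q)^n\big[(1+q)^n-1\big],$$ $$\mathbb{E}[TS]=(1+q)^{n-1}\Big(\xi\big[1-(1+p)^n\big]+2\big[(1+p)^n-(1+q)^n\big]\Big),$$ and $$\operatorname{Cov}(T,S)=(1+q)^{n-1}\Big[(1-q)\big((1+p)^n-(1+q)^n\big)-\xi\big((1+p)^n-1\big)\Big].$$
   Context: The amplicon branching process with stutter (a model of PCR) is the two-type discrete-time branching process defined as follows. There are two types of particles, target amplicons and stutter amplicons, and all particles persist forever. In each cycle, independently of everything else, each existing target amplicon produces one new target amplicon with probability $p(1-\xi)$, produces one new stutter amplicon with probability $p\xi$, and produces nothing with probability $1-p$; each existing stutter amplicon produces one new stutter amplicon with probability $p$ and nothing with probability $1-p$. Equivalently, the joint probability generating function $F_n(t,s)=\mathbb{E}[t^{T}s^{S}]$ after $n$ cycles satisfies $F_0(t,s)=t$, $G_0(s)=s$, $F_n=(1-p)F_{n-1}+p(1-\xi)F_{n-1}^2+p\xi F_{n-1}G_{n-1}$, $G_n=(1-p)G_{n-1}+pG_{n-1}^2$. *)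

theory Defs
  imports "HOL-Probability.Probability"
begin

text \<open>Offspring of one target amplicon in one cycle, as a pair
  (new targets, new stutters): (1,0) w.p. p(1-xi), (0,1) w.p. p xi, (0,0) w.p. 1-p.\<close>
definition target_offspring :: "real \<Rightarrow> real \<Rightarrow> (nat \<times> nat) pmf" where
  "target_offspring p \<xi> =
     bind_pmf (bernoulli_pmf p) (\<lambda>b.
       if b then map_pmf (\<lambda>c. if c then (0, 1) else (1, 0)) (bernoulli_pmf \<xi>)
       else return_pmf (0, 0))"

definition stutter_offspring :: "real \<Rightarrow> nat pmf" where
  "stutter_offspring p = map_pmf (\<lambda>b. if b then 1 else 0) (bernoulli_pmf p)"

fun iid_sum_pair :: "nat \<Rightarrow> (nat \<times> nat) pmf \<Rightarrow> (nat \<times> nat) pmf" where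
  "iid_sum_pair 0 D = return_pmf (0, 0)"
| "iid_sum_pair (Suc k) D =
     bind_pmf D (\<lambda>(a, b). map_pmf (\<lambda>(c, d). (a + c, b + d)) (iid_sum_pair k D))"

fun iid_sum :: "nat \<Rightarrow> nat pmf \<Rightarrow> nat pmf" where
  "iid_sum 0 D = return_pmf 0"
| "iid_sum (Suc k) D = bind_pmf D (\<lambda>a. map_pmf (\<lambda>c. a + c) (iid_sum k D))"

definition cycle_step :: "real \<Rightarrow> real \<Rightarrow> nat \<times> nat \<Rightarrow> (nat \<times> nat) pmf" where
  "cycle_step p \<xi> ts =
     (case ts of (t, s) \<Rightarrow>
       bind_pmf (iid_sum_pair t (target_offspring p \<xi>)) (\<lambda>(a, b).
         map_pmf (\<lambda>c. (t + a, s + b + c)) (iid_sum s (stutter_offspring p))))"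

fun amplicon :: "real \<Rightarrow> real \<Rightarrow> nat \<Rightarrow> (nat \<times> nat) pmf" where
  "amplicon p \<xi> 0 = return_pmf (1, 0)"
| "amplicon p \<xi> (Suc n) = bind_pmf (amplicon p \<xi> n) (cycle_step p \<xi>)"

end

theory Submission imports Defs begin

lemma E_bind:
  fixes f :: "'b \<Rightarrow> real"
  assumes A: "finite (set_pmf M)" and B: "\<And>x. x \<in> set_pmf M \<Longrightarrow> finite (set_pmf (N x))"
  shows "measure_pmf.expectation (bind_pmf M N) f
       = measure_pmf.expectation M (\<lambda>x. measure_pmf.expectation (N x) f)"
proof -
  define S where "S = set_pmf (bind_pmf M N)"
  have S: "finite S" using A B by (auto simp: S_def)
  have sub: "\<And>x. x \<in> set_pmf M \<Longrightarrow> set_pmf (N x) \<subseteq> S" by (auto simp: S_def)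
  have "measure_pmf.expectation (bind_pmf M N) f = (\<Sum>b\<in>S. f b * pmf (bind_pmf M N) b)"
    by (rule integral_measure_pmf_real[OF S]) (auto simp: S_def)
  also have "\<dots> = (\<Sum>b\<in>S. f b * (\<Sum>x\<in>set_pmf M. pmf (N x) b * pmf M x))"
    by (simp add: pmf_bind integral_measure_pmf_real[OF A])
  also have "\<dots> = (\<Sum>x\<in>set_pmf M. (\<Sum>b\<in>S. f b * pmf (N x) b) * pmf M x)"
    by (simp add: sum_distrib_left sum_distrib_right mult_ac sum.swap[of _ S])
  also have "\<dots> = (\<Sum>x\<in>set_pmf M. measure_pmf.expectation (N x) f * pmf M x)"
  proof (rule sum.cong[OF refl])
    fix x assume x: "x \<in> set_pmf M"
    show "(\<Sum>b\<in>S. f b * pmf (N x) b) * pmf M x = measure_pmf.expectation (N x) f * pmf M x"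
      using sub[OF x] by (subst integral_measure_pmf_real[OF S]) auto
  qed
  also have "\<dots> = measure_pmf.expectation M (\<lambda>x. measure_pmf.expectation (N x) f)"
    by (rule integral_measure_pmf_real[OF A, symmetric]) auto
  finally show ?thesis .
qed

lemma fin_bool: "finite (set_pmf (M :: bool pmf))" by simp

lemma fin_TO: "finite (set_pmf (target_offspring p \<xi>))"
  unfolding target_offspring_def by auto

lemma fin_SO: "finite (set_pmf (stutter_offspring p))"
  unfolding stutter_offspring_def by auto

lemma fin_iidp: "finite (set_pmf D) \<Longrightarrow> finite (set_pmf (iid_sum_pair k D))"
  by (induction k) (auto simp: split_def)

lemma fin_iid: "finite (set_pmf D) \<Longrightarrow> finite (set_pmf (iid_sum k D))"
  by (induction k) auto

lemma fin_cycle: "finite (set_pmf (cycle_step p \<xi> x))"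
  unfolding cycle_step_def using fin_iidp[OF fin_TO] fin_iid[OF fin_SO]
  by (auto simp: split_def)

lemma fin_amp: "finite (set_pmf (amplicon p \<xi> n))"
  by (induction n) (auto intro: fin_cycle)

lemma E_const[simp]: "measure_pmf.expectation M (\<lambda>_. c) = (c::real)"
  by simp

lemma TO_mom:
  assumes "0 \<le> p" "p \<le> 1" "0 \<le> \<xi>" "\<xi> \<le> 1"
  shows "measure_pmf.expectation (target_offspring p \<xi>) (\<lambda>x. real (fst x)) = p * (1 - \<xi>)"
    "measure_pmf.expectation (target_offspring p \<xi>) (\<lambda>x. real (snd x)) = p * \<xi>"
    "measure_pmf.expectation (target_offspring p \<xi>) (\<lambda>x. real (fst x) ^ 2) = p * (1 - \<xi>)"
    "measure_pmf.expectation (target_offspring p \<xi>) (\<lambda>x. real (fst x) * real (snd x)) = 0"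
  using assms by (simp_all add: target_offspring_def E_bind)

lemma SO_mom:
  assumes "0 \<le> p" "p \<le> 1"
  shows "measure_pmf.expectation (stutter_offspring p) (\<lambda>x. real x) = p"
  using assms by (simp add: stutter_offspring_def)

lemma iidp_mom:
  assumes D: "finite (set_pmf D)"
  shows "measure_pmf.expectation (iid_sum_pair k D) (\<lambda>x. real (fst x)) = k * measure_pmf.expectation D (\<lambda>x. real (fst x))
       \<and> measure_pmf.expectation (iid_sum_pair k D) (\<lambda>x. real (snd x)) = k * measure_pmf.expectation D (\<lambda>x. real (snd x))
       \<and> measure_pmf.expectation (iid_sum_pair k D) (\<lambda>x. real (fst x) ^ 2) = k * measure_pmf.expectation D (\<lambda>x. real (fst x) ^ 2)
            + k * (k - 1) * (measure_pmf.expectation D (\<lambda>x. real (fst x))) ^ 2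
       \<and> measure_pmf.expectation (iid_sum_pair k D) (\<lambda>x. real (fst x) * real (snd x)) = k * measure_pmf.expectation D (\<lambda>x. real (fst x) * real (snd x))
            + k * (k - 1) * measure_pmf.expectation D (\<lambda>x. real (fst x)) * measure_pmf.expectation D (\<lambda>x. real (snd x))"
proof (induction k)
  case 0
  then show ?case by simp
next
  case (Suc k)
  have [simp]: "integrable (measure_pmf D) f" for f :: "_ \<Rightarrow> real"
    by (rule integrable_measure_pmf_finite[OF D])
  have [simp]: "integrable (measure_pmf (iid_sum_pair k D)) f" for f :: "_ \<Rightarrow> real"
    by (rule integrable_measure_pmf_finite[OF fin_iidp[OF D]])
  let ?E = "measure_pmf.expectation"
  have e: "?E (iid_sum_pair (Suc k) D) f = ?E D (\<lambda>x. ?E (iid_sum_pair k D) (\<lambda>y. f (fst x + fst y, snd x + snd y)))"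
    for f :: "_ \<Rightarrow> real"
    by (simp add: E_bind D fin_iidp split_def)
  show ?case unfolding e using Suc.IH
    by (simp add: algebra_simps power2_eq_square)
qed

lemma iid_mom:
  assumes D: "finite (set_pmf D)"
  shows "measure_pmf.expectation (iid_sum k D) (\<lambda>x. real x) = k * measure_pmf.expectation D (\<lambda>x. real x)"
proof (induction k)
  case 0
  then show ?case by simp
next
  case (Suc k)
  have [simp]: "integrable (measure_pmf D) f" for f :: "_ \<Rightarrow> real"
    by (rule integrable_measure_pmf_finite[OF D])
  have [simp]: "integrable (measure_pmf (iid_sum k D)) f" for f :: "_ \<Rightarrow> real"
    by (rule integrable_measure_pmf_finite[OF fin_iid[OF D]])
  show ?case using Suc.IH
    by (simp add: E_bind D fin_iid algebra_simps)
qed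

lemma cyc_mom:
  assumes "0 \<le> p" "p \<le> 1" "0 \<le> \<xi>" "\<xi> \<le> 1"
  defines "q \<equiv> p * (1 - \<xi>)"
  shows "measure_pmf.expectation (cycle_step p \<xi> x) (\<lambda>y. real (fst y)) = (1 + q) * real (fst x)"
    "measure_pmf.expectation (cycle_step p \<xi> x) (\<lambda>y. real (snd y)) = (1 + p) * real (snd x) + p * \<xi> * real (fst x)"
    "measure_pmf.expectation (cycle_step p \<xi> x) (\<lambda>y. real (fst y) ^ 2) = (1 + q)^2 * real (fst x) ^ 2 + q * (1 - q) * real (fst x)"
    "measure_pmf.expectation (cycle_step p \<xi> x) (\<lambda>y. real (fst y) * real (snd y)) =
       (1 + p) * (1 + q) * real (fst x) * real (snd x) + p * \<xi> * (1 + q) * real (fst x) ^ 2 - q * p * \<xi> * real (fst x)"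
proof -
  obtain t s where x: "x = (t, s)" by (cases x)
  let ?E = "measure_pmf.expectation"
  let ?P = "iid_sum_pair t (target_offspring p \<xi>)"
  let ?S = "iid_sum s (stutter_offspring p)"
  have [simp]: "integrable (measure_pmf ?P) f" for f :: "_ \<Rightarrow> real"
    by (rule integrable_measure_pmf_finite[OF fin_iidp[OF fin_TO]])
  have [simp]: "integrable (measure_pmf ?S) f" for f :: "_ \<Rightarrow> real"
    by (rule integrable_measure_pmf_finite[OF fin_iid[OF fin_SO]])
  have e: "?E (cycle_step p \<xi> x) f = ?E ?P (\<lambda>y. ?E ?S (\<lambda>c. f (t + fst y, s + snd y + c)))"
    for f :: "_ \<Rightarrow> real"
    unfolding cycle_step_def x by (simp add: split_def, subst E_bind) (auto simp: fin_iidp fin_TO fin_iid fin_SO)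
  note M = iidp_mom[OF fin_TO, of t p \<xi>] TO_mom[OF assms(1-4)] iid_mom[OF fin_SO, of s p] SO_mom[OF assms(1,2)]
  have h1: "?E ?P (\<lambda>y. real (fst y)) = real t * q" using M by (simp add: q_def)
  have h2: "?E ?P (\<lambda>y. real (snd y)) = real t * (p * \<xi>)" using M by (simp add: q_def)
  have h3: "?E ?P (\<lambda>y. real (fst y) * real (fst y)) = real t * q + real t * (real t - 1) * q^2"
    using M by (simp add: q_def power2_eq_square)
  have h4: "?E ?P (\<lambda>y. real (fst y) * real (snd y)) = real t * (real t - 1) * q * (p * \<xi>)"
    using M by (simp add: q_def)
  have h5: "?E ?S (\<lambda>y. real y) = real s * p" using M by simp
  show "?E (cycle_step p \<xi> x) (\<lambda>y. real (fst y)) = (1 + q) * real (fst x)"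
    unfolding e by (simp add: x algebra_simps h1 h2 h3 h4 h5)
  show "?E (cycle_step p \<xi> x) (\<lambda>y. real (snd y)) = (1 + p) * real (snd x) + p * \<xi> * real (fst x)"
    unfolding e by (simp add: x algebra_simps h1 h2 h3 h4 h5)
  show "?E (cycle_step p \<xi> x) (\<lambda>y. real (fst y) ^ 2) = (1 + q)^2 * real (fst x) ^ 2 + q * (1 - q) * real (fst x)"
    unfolding e by (simp add: x algebra_simps power2_eq_square h1 h2 h3 h4 h5)
  show "?E (cycle_step p \<xi> x) (\<lambda>y. real (fst y) * real (snd y)) =
       (1 + p) * (1 + q) * real (fst x) * real (snd x) + p * \<xi> * (1 + q) * real (fst x) ^ 2 - q * p * \<xi> * real (fst x)"
    unfolding e by (simp add: x algebra_simps power2_eq_square h1 h2 h3 h4 h5)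
qed

lemma amp_mom:
  assumes P: "0 \<le> p" "p \<le> 1" "0 \<le> \<xi>" "\<xi> \<le> 1"
  defines "q \<equiv> p * (1 - \<xi>)"
  shows "measure_pmf.expectation (amplicon p \<xi> n) (\<lambda>y. real (fst y)) = (1 + q) ^ n
    \<and> measure_pmf.expectation (amplicon p \<xi> n) (\<lambda>y. real (snd y)) = (1 + p) ^ n - (1 + q) ^ n
    \<and> (1 + q) * measure_pmf.expectation (amplicon p \<xi> n) (\<lambda>y. real (fst y) ^ 2)
        = (1 - q) * (1 + q) ^ n * ((1 + q) ^ n - 1) + (1 + q) * ((1 + q) ^ n) ^ 2
    \<and> (1 + q) * measure_pmf.expectation (amplicon p \<xi> n) (\<lambda>y. real (fst y) * real (snd y))
        = (1 + q) ^ n * (\<xi> * (1 - (1 + p) ^ n) + 2 * ((1 + p) ^ n - (1 + q) ^ n))"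
proof (induction n)
  case 0
  then show ?case by simp
next
  case (Suc n)
  let ?E = "measure_pmf.expectation"
  let ?A = "amplicon p \<xi> n"
  have [simp]: "integrable (measure_pmf ?A) f" for f :: "_ \<Rightarrow> real"
    by (rule integrable_measure_pmf_finite[OF fin_amp])
  have e: "?E (amplicon p \<xi> (Suc n)) f = ?E ?A (\<lambda>x. ?E (cycle_step p \<xi> x) f)" for f :: "_ \<Rightarrow> real"
    by (simp, rule E_bind) (auto simp: fin_amp fin_cycle)
  note C = cyc_mom[OF P, folded q_def]
  define u where "u = (1 + q) ^ n"
  define v where "v = (1 + p) ^ n"
  have a: "?E ?A (\<lambda>y. real (fst y)) = u" using Suc.IH by (simp add: u_def)
  have b: "?E ?A (\<lambda>y. real (snd y)) = v - u" using Suc.IH by (simp add: u_def v_def)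
  have c: "(1 + q) * ?E ?A (\<lambda>y. real (fst y) ^ 2) = (1 - q) * u * (u - 1) + (1 + q) * u ^ 2"
    using Suc.IH by (simp add: u_def)
  have d: "(1 + q) * ?E ?A (\<lambda>y. real (fst y) * real (snd y)) = u * (\<xi> * (1 - v) + 2 * (v - u))"
    using Suc.IH by (simp add: u_def v_def)
  have a1: "?E (amplicon p \<xi> (Suc n)) (\<lambda>y. real (fst y)) = (1 + q) * u"
    unfolding e C using a by simp
  have b1: "?E (amplicon p \<xi> (Suc n)) (\<lambda>y. real (snd y)) = (1 + p) * (v - u) + p * \<xi> * u"
    unfolding e C using a b by simp
  have c1: "?E (amplicon p \<xi> (Suc n)) (\<lambda>y. real (fst y) ^ 2)
     = (1 + q)^2 * ?E ?A (\<lambda>y. real (fst y) ^ 2) + q * (1 - q) * u"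
    unfolding e C using a by simp
  have d1: "?E (amplicon p \<xi> (Suc n)) (\<lambda>y. real (fst y) * real (snd y))
     = (1 + p) * (1 + q) * ?E ?A (\<lambda>y. real (fst y) * real (snd y))
       + p * \<xi> * (1 + q) * ?E ?A (\<lambda>y. real (fst y) ^ 2) - q * p * \<xi> * u"
    unfolding e C using a by (simp add: mult.assoc)
  have c2: "(1 + q) * ?E (amplicon p \<xi> (Suc n)) (\<lambda>y. real (fst y) ^ 2)
     = (1 - q) * ((1 + q) * u) * ((1 + q) * u - 1) + (1 + q) * ((1 + q) * u) ^ 2"
  proof -
    have "(1 + q) * ?E (amplicon p \<xi> (Suc n)) (\<lambda>y. real (fst y) ^ 2)
      = (1 + q)^2 * ((1 + q) * ?E ?A (\<lambda>y. real (fst y) ^ 2)) + (1 + q) * q * (1 - q) * u"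
      unfolding c1 by (simp add: algebra_simps power2_eq_square)
    also have "\<dots> = (1 - q) * ((1 + q) * u) * ((1 + q) * u - 1) + (1 + q) * ((1 + q) * u) ^ 2"
      unfolding c by (simp add: algebra_simps power2_eq_square)
    finally show ?thesis .
  qed
  have d2: "(1 + q) * ?E (amplicon p \<xi> (Suc n)) (\<lambda>y. real (fst y) * real (snd y))
     = ((1 + q) * u) * (\<xi> * (1 - (1 + p) * v) + 2 * ((1 + p) * v - (1 + q) * u))"
  proof -
    have "(1 + q) * ?E (amplicon p \<xi> (Suc n)) (\<lambda>y. real (fst y) * real (snd y))
      = (1 + p) * (1 + q) * ((1 + q) * ?E ?A (\<lambda>y. real (fst y) * real (snd y)))
       + p * \<xi> * (1 + q) * ((1 + q) * ?E ?A (\<lambda>y. real (fst y) ^ 2)) - (1 + q) * q * p * \<xi> * u"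
      unfolding d1 by (simp add: algebra_simps)
    also have "\<dots> = ((1 + q) * u) * (\<xi> * (1 - (1 + p) * v) + 2 * ((1 + p) * v - (1 + q) * u))"
      unfolding c d by (simp add: q_def algebra_simps power2_eq_square)
    finally show ?thesis .
  qed
  show ?case using a1 b1 c2 d2
    by (simp add: u_def v_def q_def algebra_simps)
qed

theorem mainTheorem1:
  fixes p \<xi> :: real and n :: nat
  assumes "0 \<le> p" "p \<le> 1" "0 \<le> \<xi>" "\<xi> \<le> 1"
  defines "q \<equiv> p * (1 - \<xi>)"
  defines "M \<equiv> amplicon p \<xi> n"
  defines "ET \<equiv> measure_pmf.expectation M (\<lambda>x. real (fst x))"
  defines "ES \<equiv> measure_pmf.expectation M (\<lambda>x. real (snd x))"
  shows "ET = (1 + q) ^ n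
         \<and> ES = (1 + p) ^ n - (1 + q) ^ n
         \<and> measure_pmf.variance M (\<lambda>x. real (fst x))
           = (1 - q) / (1 + q) * (1 + q) ^ n * ((1 + q) ^ n - 1)
         \<and> measure_pmf.expectation M (\<lambda>x. real (fst x) * real (snd x))
           = (1 + q) powi (int n - 1) *
             (\<xi> * (1 - (1 + p) ^ n) + 2 * ((1 + p) ^ n - (1 + q) ^ n))
         \<and> measure_pmf.expectation M (\<lambda>x. (real (fst x) - ET) * (real (snd x) - ES))
           = (1 + q) powi (int n - 1) *
             ((1 - q) * ((1 + p) ^ n - (1 + q) ^ n) - \<xi> * ((1 + p) ^ n - 1))"
proof -
  have q0: "0 \<le> q" using assms by (simp add: q_def)
  have qn: "1 + q \<noteq> 0" using q0 by simp
  note A = amp_mom[OF assms(1-4), of n, folded q_def M_def]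
  define u where "u = (1 + q) ^ n"
  define v where "v = (1 + p) ^ n"
  have [simp]: "integrable (measure_pmf M) f" for f :: "_ \<Rightarrow> real"
    unfolding M_def by (rule integrable_measure_pmf_finite[OF fin_amp])
  have a: "ET = u" using A by (simp add: ET_def u_def)
  have b: "ES = v - u" using A by (simp add: ES_def u_def v_def)
  have c: "(1 + q) * measure_pmf.expectation M (\<lambda>y. real (fst y) ^ 2) = (1 - q) * u * (u - 1) + (1 + q) * u ^ 2"
    using A by (simp add: u_def)
  have d: "(1 + q) * measure_pmf.expectation M (\<lambda>y. real (fst y) * real (snd y)) = u * (\<xi> * (1 - v) + 2 * (v - u))"
    using A by (simp add: u_def v_def)
  have pw: "(1 + q) powi (int n - 1) = u / (1 + q)"
    using qn by (simp add: power_int_diff u_def)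
  have var: "measure_pmf.variance M (\<lambda>x. real (fst x)) = measure_pmf.expectation M (\<lambda>y. real (fst y) ^ 2) - u ^ 2"
  proof -
    have "measure_pmf.variance M (\<lambda>x. real (fst x)) = measure_pmf.expectation M (\<lambda>y. real (fst y) ^ 2) - (measure_pmf.expectation M (\<lambda>x. real (fst x))) ^ 2"
      by (rule measure_pmf.variance_eq) auto
    then show ?thesis using a by (simp add: ET_def)
  qed
  have var2: "measure_pmf.expectation M (\<lambda>y. real (fst y) ^ 2) - u ^ 2 = (1 - q) / (1 + q) * u * (u - 1)"
    using c qn by (simp add: field_simps)
  have tsv: "measure_pmf.expectation M (\<lambda>x. real (fst x) * real (snd x)) = u / (1 + q) * (\<xi> * (1 - v) + 2 * (v - u))"
    using d qn by (simp add: field_simps)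
  have cov: "measure_pmf.expectation M (\<lambda>x. (real (fst x) - ET) * (real (snd x) - ES))
      = measure_pmf.expectation M (\<lambda>x. real (fst x) * real (snd x)) - u * (v - u)"
  proof -
    have "measure_pmf.expectation M (\<lambda>x. (real (fst x) - ET) * (real (snd x) - ES))
      = measure_pmf.expectation M (\<lambda>x. real (fst x) * real (snd x) - ES * real (fst x) - ET * real (snd x) + ET * ES)"
      by (simp add: algebra_simps)
    also have "\<dots> = measure_pmf.expectation M (\<lambda>x. real (fst x) * real (snd x)) - ES * ET - ET * ES + ET * ES"
      by (simp add: ET_def ES_def)
    finally show ?thesis using a b by simp
  qed
  have cov2: "measure_pmf.expectation M (\<lambda>x. real (fst x) * real (snd x)) - u * (v - u)
     = u / (1 + q) * ((1 - q) * (v - u) - \<xi> * (v - 1))"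
    using tsv qn by (simp add: field_simps)
  show ?thesis
    unfolding cov cov2 var var2 unfolding tsv pw a b u_def[symmetric] v_def[symmetric] by simp
qed

end
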